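(* Let $G$ be a finite group with identity $e$, $R[G]$ its real group algebra, $S=\{x\in R[G]:\sum_gx_g=1,\ x_g\ge0\ \forall g\}$, and $x\in S$. Then: (1) the elements $e,x,x^2,\dots,x^{n_x-1}$ of $R[G]$ are linearly independent; (2) for nonnegative integers $r_1,r_2$, one has $c_xx^{r_1}=c_xx^{r_2}$ if and only if $r_1\equiv r_2\pmod{m_x}$.
   Context: $\mathrm{Supp}(y)=\{g:y_g\ne0\}$, $\mathbb N=\{1,2,\dots\}$, $x^0=e$. For $x\in S$: $n_x=\min\{k\in\mathbb N:(x^k)_e\ne0\}$; $G_x$ is the subgroup of $G$ generated by $\mathrm{Supp}(x^{n_x})$; $c_x=\frac1{|G_x|}\sum_{g\in G_x}g$; $m_x=\min\{k\in\mathbb N:\mathrm{Supp}(x^k)\subset G_x\}$. *)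

theory Defs
  imports "HOL-Algebra.Algebra" "HOL-Number_Theory.Cong"
begin

text \<open>Real group algebra R[G] of a finite group G (HOL-Algebra locale):
 elements are functions carrier G -> real, extended by 0 outside the carrier.\<close>

definition ga_mult :: "('g, 'b) monoid_scheme \<Rightarrow> ('g \<Rightarrow> real) \<Rightarrow> ('g \<Rightarrow> real) \<Rightarrow> ('g \<Rightarrow> real)" where
  "ga_mult G x y = (\<lambda>g. if g \<in> carrier G
      then (\<Sum>h\<in>carrier G. x h * y (inv\<^bsub>G\<^esub> h \<otimes>\<^bsub>G\<^esub> g)) else 0)"

definition ga_one :: "('g, 'b) monoid_scheme \<Rightarrow> ('g \<Rightarrow> real)" where
  "ga_one G = (\<lambda>g. if g = \<one>\<^bsub>G\<^esub> then 1 else 0)"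

primrec ga_pow :: "('g, 'b) monoid_scheme \<Rightarrow> ('g \<Rightarrow> real) \<Rightarrow> nat \<Rightarrow> ('g \<Rightarrow> real)" where
  "ga_pow G x 0 = ga_one G"
| "ga_pow G x (Suc k) = ga_mult G (ga_pow G x k) x"

definition simplex :: "('g, 'b) monoid_scheme \<Rightarrow> ('g \<Rightarrow> real) set" where
  "simplex G = {x. (\<forall>g. g \<notin> carrier G \<longrightarrow> x g = 0) \<and> (\<forall>g\<in>carrier G. x g \<ge> 0)
                   \<and> (\<Sum>g\<in>carrier G. x g) = 1}"

definition ga_supp :: "('g, 'b) monoid_scheme \<Rightarrow> ('g \<Rightarrow> real) \<Rightarrow> 'g set" where
  "ga_supp G y = {g \<in> carrier G. y g \<noteq> 0}"

definition n_x :: "('g, 'b) monoid_scheme \<Rightarrow> ('g \<Rightarrow> real) \<Rightarrow> nat" where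
  "n_x G x = (LEAST k. k \<ge> 1 \<and> ga_pow G x k \<one>\<^bsub>G\<^esub> \<noteq> 0)"

definition G_x :: "('g, 'b) monoid_scheme \<Rightarrow> ('g \<Rightarrow> real) \<Rightarrow> 'g set" where
  "G_x G x = generate G (ga_supp G (ga_pow G x (n_x G x)))"

definition c_x :: "('g, 'b) monoid_scheme \<Rightarrow> ('g \<Rightarrow> real) \<Rightarrow> ('g \<Rightarrow> real)" where
  "c_x G x = (\<lambda>g. if g \<in> G_x G x then 1 / real (card (G_x G x)) else 0)"

definition m_x :: "('g, 'b) monoid_scheme \<Rightarrow> ('g \<Rightarrow> real) \<Rightarrow> nat" where
  "m_x G x = (LEAST k. k \<ge> 1 \<and> ga_supp G (ga_pow G x k) \<subseteq> G_x G x)"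

end

theory Submission
  imports Defs
begin

locale pg = group G for G :: "('g,'b) monoid_scheme" (structure) +
  fixes x :: "'g \<Rightarrow> real"
  assumes fin: "finite (carrier G)" and xs: "x \<in> simplex G"
begin

definition P :: "nat \<Rightarrow> 'g set" where "P k = ga_supp G (ga_pow G x k)"
definition A :: "'g set" where "A = ga_supp G x"
definition sp :: "'g set \<Rightarrow> 'g set \<Rightarrow> 'g set" where
  "sp U V = {a \<otimes> b | a b. a \<in> U \<and> b \<in> V}"

lemma x_nonneg: "x g \<ge> 0"
  using xs unfolding simplex_def by (cases "g \<in> carrier G") auto

lemma x_out: "g \<notin> carrier G \<Longrightarrow> x g = 0"
  using xs unfolding simplex_def by auto

lemma x_sum: "(\<Sum>g\<in>carrier G. x g) = 1"
  using xs unfolding simplex_def by auto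

lemma pow_nonneg: "ga_pow G x k g \<ge> 0"
proof (induction k arbitrary: g)
  case 0 then show ?case by (simp add: ga_one_def)
next
  case (Suc k) then show ?case
    by (simp add: ga_mult_def x_nonneg sum_nonneg)
qed

lemma pow_out: "g \<notin> carrier G \<Longrightarrow> ga_pow G x k g = 0"
  by (cases k) (auto simp: ga_one_def ga_mult_def)

lemma bij_lmult: "h \<in> carrier G \<Longrightarrow> bij_betw (\<lambda>g. inv h \<otimes> g) (carrier G) (carrier G)"
  apply (rule bij_betwI[where g="\<lambda>g. h \<otimes> g"])
  apply (auto simp: m_assoc[symmetric])
  done

lemma sum_shift: "h \<in> carrier G \<Longrightarrow> (\<Sum>g\<in>carrier G. f (inv h \<otimes> g)) = (\<Sum>g\<in>carrier G. f g)"
  using sum.reindex_bij_betw[OF bij_lmult] by blast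

lemma pow_sum: "(\<Sum>g\<in>carrier G. ga_pow G x k g) = 1"
proof (induction k)
  case 0 then show ?case using fin by (simp add: ga_one_def)
next
  case (Suc k)
  have "(\<Sum>g\<in>carrier G. ga_pow G x (Suc k) g)
      = (\<Sum>g\<in>carrier G. \<Sum>h\<in>carrier G. ga_pow G x k h * x (inv h \<otimes> g))"
    by (simp add: ga_mult_def)
  also have "\<dots> = (\<Sum>h\<in>carrier G. ga_pow G x k h * (\<Sum>g\<in>carrier G. x (inv h \<otimes> g)))"
    by (subst sum.swap) (simp add: sum_distrib_left)
  also have "\<dots> = (\<Sum>h\<in>carrier G. ga_pow G x k h)"
    by (rule sum.cong) (auto simp: sum_shift x_sum)
  finally show ?case using Suc by simp
qed

lemma P_sub: "P k \<subseteq> carrier G"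
  by (auto simp: P_def ga_supp_def)

lemma P_0: "P 0 = {\<one>}"
  by (auto simp: P_def ga_supp_def ga_one_def)

lemma P_Suc: "P (Suc k) = sp (P k) A"
proof -
  have "g \<in> P (Suc k) \<longleftrightarrow> g \<in> sp (P k) A" for g
  proof (cases "g \<in> carrier G")
    case True
    have "g \<in> P (Suc k) \<longleftrightarrow> (\<Sum>h\<in>carrier G. ga_pow G x k h * x (inv h \<otimes> g)) \<noteq> 0"
      using True by (simp add: P_def ga_supp_def ga_mult_def)
    also have "\<dots> \<longleftrightarrow> (\<exists>h\<in>carrier G. ga_pow G x k h * x (inv h \<otimes> g) \<noteq> 0)"
      using sum_nonneg_eq_0_iff[OF fin, of "\<lambda>h. ga_pow G x k h * x (inv h \<otimes> g)"]
      by (auto simp: pow_nonneg x_nonneg)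
    also have "\<dots> \<longleftrightarrow> g \<in> sp (P k) A"
    proof
      assume "\<exists>h\<in>carrier G. ga_pow G x k h * x (inv h \<otimes> g) \<noteq> 0"
      then obtain h where h: "h \<in> carrier G" "ga_pow G x k h \<noteq> 0" "x (inv h \<otimes> g) \<noteq> 0" by auto
      have "inv h \<otimes> g \<in> carrier G" using h True by auto
      moreover have "g = h \<otimes> (inv h \<otimes> g)" using h True by (simp add: m_assoc[symmetric])
      ultimately show "g \<in> sp (P k) A" using h unfolding sp_def P_def A_def ga_supp_def by blast
    next
      assume "g \<in> sp (P k) A"
      then obtain h a where ha: "h \<in> P k" "a \<in> A" "g = h \<otimes> a" unfolding sp_def by auto
      have hc: "h \<in> carrier G" "a \<in> carrier G" using ha by (auto simp: P_def A_def ga_supp_def)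
      have "inv h \<otimes> g = a" using ha hc by (simp add: m_assoc[symmetric])
      then show "\<exists>h\<in>carrier G. ga_pow G x k h * x (inv h \<otimes> g) \<noteq> 0"
        using ha hc by (auto simp: P_def A_def ga_supp_def)
    qed
    finally show ?thesis .
  next
    case False
    then show ?thesis using P_sub[of "Suc k"] unfolding sp_def A_def ga_supp_def
      using P_sub[of k] by auto
  qed
  then show ?thesis by blast
qed

lemma A_sub: "A \<subseteq> carrier G" by (auto simp: A_def ga_supp_def)

lemma sp_assoc: "U \<subseteq> carrier G \<Longrightarrow> V \<subseteq> carrier G \<Longrightarrow> W \<subseteq> carrier G \<Longrightarrow>
   sp (sp U V) W = sp U (sp V W)"
  unfolding sp_def
  apply (auto simp: m_assoc)
  apply (metis m_assoc subsetD)+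
  done

lemma sp_one: "U \<subseteq> carrier G \<Longrightarrow> sp U {\<one>} = U"
  unfolding sp_def by force

lemma sp_sub: "U \<subseteq> carrier G \<Longrightarrow> V \<subseteq> carrier G \<Longrightarrow> sp U V \<subseteq> carrier G"
  unfolding sp_def by auto

lemma P_add: "P (k + l) = sp (P k) (P l)"
proof (induction l)
  case 0 then show ?case by (simp add: P_0 sp_one P_sub)
next
  case (Suc l)
  then show ?case by (simp add: P_Suc sp_assoc P_sub A_sub)
qed

lemma A_ne: "A \<noteq> {}"
proof
  assume "A = {}"
  then have "\<forall>g\<in>carrier G. x g = 0" by (auto simp: A_def ga_supp_def)
  then show False using x_sum by simp
qed

lemma P_ne: "P k \<noteq> {}"
proof (induction k)
  case 0 then show ?case by (simp add: P_0)
next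
  case (Suc k) then show ?case using A_ne by (auto simp: P_Suc sp_def)
qed

lemma pow_in_P: "a \<in> A \<Longrightarrow> a [^] k \<in> P k"
proof (induction k)
  case 0 then show ?case by (simp add: P_0)
next
  case (Suc k) then show ?case by (auto simp: P_Suc sp_def)
qed

lemma exists_n: "\<exists>k. k \<ge> 1 \<and> ga_pow G x k \<one> \<noteq> 0"
proof -
  obtain a where a: "a \<in> A" using A_ne by auto
  then have ac: "a \<in> carrier G" using A_sub by auto
  have "\<one> \<in> P (ord a)" using pow_in_P[OF a, of "ord a"] ac by simp
  then show ?thesis using ord_ge_1[OF fin ac] by (auto simp: P_def ga_supp_def)
qed


abbreviation "n \<equiv> n_x G x"

lemma n_prop: "n \<ge> 1 \<and> ga_pow G x n \<one> \<noteq> 0"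
  unfolding n_x_def using exists_n by (rule LeastI_ex)

lemma n_min: "1 \<le> p \<Longrightarrow> p < n \<Longrightarrow> ga_pow G x p \<one> = 0"
  unfolding n_x_def using not_less_Least by blast

lemma mult_lin: "ga_mult G (\<lambda>g. \<Sum>k\<in>K. a k * f k g) y = (\<lambda>g. \<Sum>k\<in>K. a k * ga_mult G (f k) y g)"
  unfolding ga_mult_def
  by (auto simp: sum_distrib_left sum_distrib_right mult.assoc intro!: ext sum.swap)

lemma mult_zero: "ga_mult G (\<lambda>g. 0) y = (\<lambda>g. 0)"
  unfolding ga_mult_def by (rule ext) simp

lemma part1:
  assumes h: "(\<lambda>g. \<Sum>k<n. a k * ga_pow G x k g) = (\<lambda>g. 0)"
  shows "\<forall>k<n. a k = 0"
proof (rule ccontr)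
  assume "\<not> (\<forall>k<n. a k = 0)"
  then have ne: "{k. k < n \<and> a k \<noteq> 0} \<noteq> {}" by auto
  define j where "j = Max {k. k < n \<and> a k \<noteq> 0}"
  have jin: "j < n \<and> a j \<noteq> 0" unfolding j_def using Max_in[OF _ ne] by auto
  have jmax: "k < n \<Longrightarrow> a k \<noteq> 0 \<Longrightarrow> k \<le> j" for k unfolding j_def by (rule Max_ge) auto
  have it: "(\<lambda>g. \<Sum>k<n. a k * ga_pow G x (k + p) g) = (\<lambda>g. 0)" for p
  proof (induction p)
    case 0 then show ?case using h by simp
  next
    case (Suc p)
    have "ga_mult G (\<lambda>g. \<Sum>k<n. a k * ga_pow G x (k + p) g) x = ga_mult G (\<lambda>g. 0) x"
      using Suc by simp
    then have "(\<lambda>g. \<Sum>k<n. a k * ga_mult G (ga_pow G x (k + p)) x g) = (\<lambda>g. 0)"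
      using Suc unfolding mult_lin[symmetric] by (simp add: mult_zero)
    then show ?case by simp
  qed
  have "(\<Sum>k<n. a k * ga_pow G x (k + (n - j)) \<one>) = 0" using fun_cong[OF it[of "n - j"]] by simp
  moreover have "(\<Sum>k<n. a k * ga_pow G x (k + (n - j)) \<one>) = a j * ga_pow G x (j + (n - j)) \<one>"
  proof (rule sum.remove[THEN trans])
    show "j \<in> {..<n}" using jin by simp
    have "a k * ga_pow G x (k + (n - j)) \<one> = 0" if "k \<in> {..<n} - {j}" for k
    proof (cases "k < j")
      case True
      then have "ga_pow G x (k + (n - j)) \<one> = 0" using jin by (intro n_min) auto
      then show ?thesis by simp
    next
      case False
      then have "a k = 0" using jmax[of k] that by force
      then show ?thesis by simp
    qed
    then show "a j * ga_pow G x (j + (n - j)) \<one> + (\<Sum>k\<in>{..<n} - {j}. a k * ga_pow G x (k + (n - j)) \<one>) =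
      a j * ga_pow G x (j + (n - j)) \<one>" by (subst sum.neutral) auto
  qed simp
  ultimately show False using jin n_prop by simp
qed


abbreviation "Hx \<equiv> G_x G x"

lemma Hx_def': "Hx = generate G (P n)" by (simp add: G_x_def P_def)

lemma Hsub: "subgroup Hx G" unfolding Hx_def' by (rule generate_is_subgroup[OF P_sub])

lemma Pn_H: "P n \<subseteq> Hx" unfolding Hx_def' by (auto intro: generate.incl)

lemma Hcar: "Hx \<subseteq> carrier G" using subgroup.subset[OF Hsub] .

lemma sp_H: "U \<subseteq> Hx \<Longrightarrow> V \<subseteq> Hx \<Longrightarrow> sp U V \<subseteq> Hx"
  unfolding sp_def using subgroup.m_closed[OF Hsub] by blast

lemma Pjn: "P (j * n) \<subseteq> Hx"
proof (induction j)
  case 0 then show ?case using subgroup.one_closed[OF Hsub] by (simp add: P_0)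
next
  case (Suc j)
  have "P (Suc j * n) = sp (P n) (P (j * n))" by (simp add: P_add[symmetric])
  then show ?case using sp_H[OF Pn_H Suc] by simp
qed

lemma coset1:
  assumes a: "a \<in> P k" and b: "b \<in> P k"
  shows "a \<otimes> inv b \<in> Hx"
proof -
  obtain c where c: "c \<in> P (k * (n - 1))" using P_ne by blast
  have e: "k + k * (n - 1) = k * n" using n_prop by (cases n) auto
  have "a \<otimes> c \<in> Hx" "b \<otimes> c \<in> Hx"
    using Pjn[of k] a b c unfolding P_add[of k "k * (n - 1)", unfolded e] sp_def
    by (auto simp: mult.commute)
  have car: "a \<in> carrier G" "b \<in> carrier G" "c \<in> carrier G" using a b c P_sub by auto
  have "(a \<otimes> c) \<otimes> inv (b \<otimes> c) \<in> Hx"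
    using \<open>a \<otimes> c \<in> Hx\<close> \<open>b \<otimes> c \<in> Hx\<close> subgroup.m_closed[OF Hsub] subgroup.m_inv_closed[OF Hsub] by blast
  moreover have "(a \<otimes> c) \<otimes> inv (b \<otimes> c) = a \<otimes> inv b"
    using car by (simp add: inv_mult_group m_assoc[symmetric]) (simp add: m_assoc)
  ultimately show ?thesis by simp
qed


lemma D_add: "P d1 \<subseteq> Hx \<Longrightarrow> P d2 \<subseteq> Hx \<Longrightarrow> P (d1 + d2) \<subseteq> Hx"
  by (simp add: P_add sp_H)

lemma D_sub:
  assumes 1: "P d1 \<subseteq> Hx" and 2: "P (d1 + d2) \<subseteq> Hx"
  shows "P d2 \<subseteq> Hx"
proof
  fix b assume b: "b \<in> P d2"
  obtain a where a: "a \<in> P d1" using P_ne by blast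
  have ab: "a \<otimes> b \<in> Hx" using 2 a b unfolding P_add sp_def by blast
  have aH: "a \<in> Hx" using 1 a by blast
  have car: "a \<in> carrier G" "b \<in> carrier G" using a b P_sub by auto
  have "inv a \<otimes> (a \<otimes> b) \<in> Hx"
    using ab aH subgroup.m_closed[OF Hsub] subgroup.m_inv_closed[OF Hsub] by blast
  then show "b \<in> Hx" using car by (simp add: m_assoc[symmetric])
qed

abbreviation "m \<equiv> m_x G x"

lemma m_prop: "m \<ge> 1 \<and> P m \<subseteq> Hx"
proof -
  have "n \<ge> 1 \<and> ga_supp G (ga_pow G x n) \<subseteq> Hx" using n_prop Pn_H by (simp add: P_def)
  then have "m \<ge> 1 \<and> ga_supp G (ga_pow G x m) \<subseteq> Hx" unfolding m_x_def by (rule LeastI)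
  then show ?thesis by (simp add: P_def)
qed

lemma m_min: "1 \<le> k \<Longrightarrow> k < m \<Longrightarrow> \<not> P k \<subseteq> Hx"
  unfolding m_x_def P_def using not_less_Least by blast

lemma D_mult: "P (q * m) \<subseteq> Hx"
proof (induction q)
  case 0 then show ?case using subgroup.one_closed[OF Hsub] by (simp add: P_0)
next
  case (Suc q) then show ?case using D_add[OF m_prop[THEN conjunct2] Suc] by simp
qed

lemma D_iff: "P d \<subseteq> Hx \<longleftrightarrow> m dvd d"
proof
  assume h: "P d \<subseteq> Hx"
  have "d = (d div m) * m + d mod m" by (rule div_mult_mod_eq[symmetric])
  then have "P ((d div m) * m + d mod m) \<subseteq> Hx" using h by simp
  then have "P (d mod m) \<subseteq> Hx" using D_sub[OF D_mult] by blast
  moreover have "d mod m < m" using m_prop by simp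
  ultimately have "d mod m = 0" using m_min[of "d mod m"] by (cases "d mod m") auto
  then show "m dvd d" by auto
next
  assume "m dvd d"
  then obtain q where "d = q * m" by (metis dvd_def mult.commute)
  then show "P d \<subseteq> Hx" using D_mult by simp
qed


definition Ind :: "nat \<Rightarrow> 'g set" where
  "Ind r = {g \<in> carrier G. \<forall>a\<in>P r. g \<otimes> inv a \<in> Hx}"

lemma Hfin: "finite Hx" using Hcar fin finite_subset by blast

lemma sum_H:
  assumes g: "g \<in> carrier G"
  shows "(\<Sum>h\<in>Hx. ga_pow G x r (inv h \<otimes> g)) = (if g \<in> Ind r then 1 else 0)"
proof (cases "g \<in> Ind r")
  case True
  let ?f = "\<lambda>h. inv h \<otimes> g"
  have inj: "inj_on ?f Hx"
  proof (rule inj_onI)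
    fix h1 h2 assume h: "h1 \<in> Hx" "h2 \<in> Hx" "inv h1 \<otimes> g = inv h2 \<otimes> g"
    then have "inv h1 = inv h2" using g Hcar by (metis inv_closed r_cancel subsetD)
    then show "h1 = h2" using h Hcar by (metis inv_inv subsetD)
  qed
  have sub: "?f ` Hx \<subseteq> carrier G" using Hcar g by auto
  have "(\<Sum>h\<in>Hx. ga_pow G x r (?f h)) = (\<Sum>z\<in>?f ` Hx. ga_pow G x r z)"
    using sum.reindex[OF inj, of "ga_pow G x r"] by simp
  also have "\<dots> = (\<Sum>z\<in>carrier G. ga_pow G x r z)"
  proof (rule sum.mono_neutral_left[OF fin sub])
    show "\<forall>z\<in>carrier G - ?f ` Hx. ga_pow G x r z = 0"
    proof
      fix z assume z: "z \<in> carrier G - ?f ` Hx"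
      show "ga_pow G x r z = 0"
      proof (rule ccontr)
        assume "ga_pow G x r z \<noteq> 0"
        then have zP: "z \<in> P r" using z by (auto simp: P_def ga_supp_def)
        then have hH: "g \<otimes> inv z \<in> Hx" using True by (auto simp: Ind_def)
        have "inv (g \<otimes> inv z) \<otimes> g = z" using z g
          by (simp add: inv_mult_group m_assoc)
        then show False using z hH by force
      qed
    qed
  qed
  also have "\<dots> = 1" by (rule pow_sum)
  finally show ?thesis using True by simp
next
  case False
  then obtain a where a: "a \<in> P r" "g \<otimes> inv a \<notin> Hx" using g by (auto simp: Ind_def)
  have "ga_pow G x r (inv h \<otimes> g) = 0" if h: "h \<in> Hx" for h
  proof (rule ccontr)
    assume "ga_pow G x r (inv h \<otimes> g) \<noteq> 0"
    then have zP: "inv h \<otimes> g \<in> P r" using h g Hcar by (auto simp: P_def ga_supp_def)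
    have "(inv h \<otimes> g) \<otimes> inv a \<in> Hx" by (rule coset1[OF zP a(1)])
    then have "h \<otimes> ((inv h \<otimes> g) \<otimes> inv a) \<in> Hx" using h subgroup.m_closed[OF Hsub] by blast
    moreover have "h \<otimes> ((inv h \<otimes> g) \<otimes> inv a) = g \<otimes> inv a"
    proof -
      have c: "h \<in> carrier G" "a \<in> carrier G" using h a Hcar P_sub by auto
      then show ?thesis using g by (simp add: m_assoc[symmetric])
    qed
    ultimately show False using a by simp
  qed
  then show ?thesis using False by simp
qed

lemma cx_form: "ga_mult G (c_x G x) (ga_pow G x r) = (\<lambda>g. if g \<in> Ind r then 1 / real (card Hx) else 0)"
proof (rule ext)
  fix g
  show "ga_mult G (c_x G x) (ga_pow G x r) g = (if g \<in> Ind r then 1 / real (card Hx) else 0)"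
  proof (cases "g \<in> carrier G")
    case False then show ?thesis by (auto simp: ga_mult_def Ind_def)
  next
    case True
    have "ga_mult G (c_x G x) (ga_pow G x r) g
        = (\<Sum>h\<in>carrier G. (if h \<in> Hx then ga_pow G x r (inv h \<otimes> g) / real (card Hx) else 0))"
      using True unfolding ga_mult_def c_x_def by (auto intro!: sum.cong)
    also have "\<dots> = (\<Sum>h\<in>carrier G \<inter> Hx. ga_pow G x r (inv h \<otimes> g) / real (card Hx))"
      by (rule sum.inter_restrict[OF fin, symmetric])
    also have "carrier G \<inter> Hx = Hx" using Hcar by blast
    also have "(\<Sum>h\<in>Hx. ga_pow G x r (inv h \<otimes> g) / real (card Hx))
        = (\<Sum>h\<in>Hx. ga_pow G x r (inv h \<otimes> g)) / real (card Hx)"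
      by (simp add: sum_divide_distrib)
    finally show ?thesis using sum_H[OF True, of r] by simp
  qed
qed


lemma Ind_shift: "Ind (d + r) = Ind r \<longleftrightarrow> P d \<subseteq> Hx"
proof
  assume eq: "Ind (d + r) = Ind r"
  show "P d \<subseteq> Hx"
  proof
    fix b assume b: "b \<in> P d"
    obtain a where a: "a \<in> P r" using P_ne by blast
    have car: "a \<in> carrier G" "b \<in> carrier G" using a b P_sub by auto
    have "a \<in> Ind r" using a car coset1[OF a] by (auto simp: Ind_def)
    then have "a \<in> Ind (d + r)" using eq by simp
    moreover have "b \<otimes> a \<in> P (d + r)" using a b by (auto simp: P_add sp_def)
    ultimately have "a \<otimes> inv (b \<otimes> a) \<in> Hx" by (auto simp: Ind_def)
    moreover have "a \<otimes> inv (b \<otimes> a) = inv b" using car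
      by (simp add: inv_mult_group m_assoc[symmetric])
    ultimately have "inv (inv b) \<in> Hx" using subgroup.m_inv_closed[OF Hsub] by simp
    then show "b \<in> Hx" using car by simp
  qed
next
  assume D: "P d \<subseteq> Hx"
  show "Ind (d + r) = Ind r"
  proof (intro Set.set_eqI iffI)
    fix g assume g: "g \<in> Ind r"
    show "g \<in> Ind (d + r)" unfolding Ind_def
    proof (intro CollectI conjI ballI)
      show gc: "g \<in> carrier G" using g by (simp add: Ind_def)
      fix c assume "c \<in> P (d + r)"
      then obtain b a where ba: "b \<in> P d" "a \<in> P r" "c = b \<otimes> a" by (auto simp: P_add sp_def)
      have car: "a \<in> carrier G" "b \<in> carrier G" using ba P_sub by auto
      have "g \<otimes> inv a \<in> Hx" using g ba by (auto simp: Ind_def)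
      moreover have "inv b \<in> Hx" using D ba subgroup.m_inv_closed[OF Hsub] by blast
      ultimately have "(g \<otimes> inv a) \<otimes> inv b \<in> Hx" using subgroup.m_closed[OF Hsub] by blast
      moreover have "(g \<otimes> inv a) \<otimes> inv b = g \<otimes> inv c" using car gc ba
        by (simp add: inv_mult_group m_assoc)
      ultimately show "g \<otimes> inv c \<in> Hx" by simp
    qed
  next
    fix g assume g: "g \<in> Ind (d + r)"
    show "g \<in> Ind r" unfolding Ind_def
    proof (intro CollectI conjI ballI)
      show gc: "g \<in> carrier G" using g by (simp add: Ind_def)
      fix a assume a: "a \<in> P r"
      obtain b where b: "b \<in> P d" using P_ne by blast
      have car: "a \<in> carrier G" "b \<in> carrier G" using a b P_sub by auto
      have "b \<otimes> a \<in> P (d + r)" using a b by (auto simp: P_add sp_def)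
      then have "g \<otimes> inv (b \<otimes> a) \<in> Hx" using g by (auto simp: Ind_def)
      moreover have "b \<in> Hx" using D b by blast
      ultimately have "(g \<otimes> inv (b \<otimes> a)) \<otimes> b \<in> Hx" using subgroup.m_closed[OF Hsub] by blast
      moreover have "(g \<otimes> inv (b \<otimes> a)) \<otimes> b = g \<otimes> inv a" using car gc
        by (simp add: inv_mult_group m_assoc)
      ultimately show "g \<otimes> inv a \<in> Hx" by simp
    qed
  qed
qed

lemma card_pos: "real (card Hx) > 0"
  using Hfin subgroup.one_closed[OF Hsub] card_gt_0_iff by fastforce

lemma cx_eq: "ga_mult G (c_x G x) (ga_pow G x r1) = ga_mult G (c_x G x) (ga_pow G x r2)
   \<longleftrightarrow> Ind r1 = Ind r2"
proof -
  have ne: "1 / real (card Hx) \<noteq> 0" using card_pos by simp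
  have "(\<lambda>g. if g \<in> Ind r1 then 1 / real (card Hx) else 0) = (\<lambda>g. if g \<in> Ind r2 then 1 / real (card Hx) else 0)
    \<longleftrightarrow> Ind r1 = Ind r2"
  proof
    assume h: "(\<lambda>g. if g \<in> Ind r1 then 1 / real (card Hx) else 0) = (\<lambda>g. if g \<in> Ind r2 then 1 / real (card Hx) else 0)"
    show "Ind r1 = Ind r2"
    proof (rule Set.set_eqI)
      fix g show "g \<in> Ind r1 \<longleftrightarrow> g \<in> Ind r2" using fun_cong[OF h, of g] ne by (auto split: if_splits)
    qed
  qed simp
  then show ?thesis by (simp add: cx_form)
qed

lemma part2_le: "r1 \<le> r2 \<Longrightarrow>
  ga_mult G (c_x G x) (ga_pow G x r1) = ga_mult G (c_x G x) (ga_pow G x r2) \<longleftrightarrow> [r1 = r2] (mod m)"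
proof -
  assume "r1 \<le> r2"
  then obtain d where d: "r2 = d + r1" by (metis le_add_diff_inverse2)
  have "[r1 = r2] (mod m) \<longleftrightarrow> [d + r1 = r1] (mod m)" using d by (simp add: cong_sym_eq)
  also have "\<dots> \<longleftrightarrow> m dvd d" by (simp add: cong_add_rcancel_0_nat cong_0_iff)
  finally show ?thesis using cx_eq[of r1 r2] Ind_shift[of d r1] D_iff[of d] d by auto
qed

lemma part2: "ga_mult G (c_x G x) (ga_pow G x r1) = ga_mult G (c_x G x) (ga_pow G x r2) \<longleftrightarrow> [r1 = r2] (mod m)"
proof (cases "r1 \<le> r2")
  case True then show ?thesis by (rule part2_le)
next
  case False
  then have "r2 \<le> r1" by simp
  from part2_le[OF this] show ?thesis by (auto simp: cong_sym_eq)
qed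

end

theorem proposition2:
  fixes G :: "('g, 'b) monoid_scheme" and x :: "'g \<Rightarrow> real"
  assumes "group G" and "finite (carrier G)" and "x \<in> simplex G"
  shows "(\<forall>a :: nat \<Rightarrow> real.
            (\<lambda>g. \<Sum>k<n_x G x. a k * ga_pow G x k g) = (\<lambda>g. 0)
            \<longrightarrow> (\<forall>k<n_x G x. a k = 0))
       \<and> (\<forall>r1 r2 :: nat.
            ga_mult G (c_x G x) (ga_pow G x r1) = ga_mult G (c_x G x) (ga_pow G x r2)
            \<longleftrightarrow> [r1 = r2] (mod m_x G x))"
proof -
  interpret pg G x using assms by (simp add: pg_def pg_axioms_def)
  show ?thesis using part1 part2 by blast
qed

end
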